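(* There exists a function $q\in L_{1,loc}(\mathbb{R}_+)$, $\mathbb{R}_+=[0,+\infty)$, taking purely imaginary values $q(x)\in i\mathbb{R}$ for $x\in\mathbb{R}_+$, with $|q(x)|\to+\infty$ as $x\to+\infty$, such that the following operator $L_0$ has no extension with compact resolvent: $L_0$ is the operator in $L_2(\mathbb{R}_+)$ acting by $L_0y=-y''+qy$ on the domain $$\mathscr{D}_0=\{y\in L_2(\mathbb{R}_+):\ y,y'\in AC_{loc}(\mathbb{R}_+),\ -y''+qy\in L_2(\mathbb{R}_+),\ y(0)=y'(0)=0,\ \exists x_0>0\ \forall x\ge x_0\ y(x)=0\}.$$
   Context: $AC_{loc}(\mathbb{R}_+)$ denotes functions absolutely continuous on every compact subinterval of $[0,+\infty)$. An extension of $L_0$ is an operator $L\supset L_0$ in $L_2(\mathbb{R}_+)$; it has compact resolvent if its resolvent set is nonempty and its resolvent is a compact operator. *)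

theory Defs
  imports "HOL-Analysis.Analysis"
begin

abbreviation Mplus :: "real measure" where
  "Mplus \<equiv> restrict_space lborel {0..}"

definition abs_cont_on :: "(real \<Rightarrow> complex) \<Rightarrow> real \<Rightarrow> real \<Rightarrow> bool" where
  "abs_cont_on f a b \<longleftrightarrow>
     (\<forall>e>0. \<exists>d>0. \<forall>(n::nat) (u::nat \<Rightarrow> real) (v::nat \<Rightarrow> real).
        (\<forall>i<n. a \<le> u i \<and> u i \<le> v i \<and> v i \<le> b) \<longrightarrow>
        (\<forall>i<n. \<forall>j<n. i \<noteq> j \<longrightarrow> v i \<le> u j \<or> v j \<le> u i) \<longrightarrow>
        (\<Sum>i<n. v i - u i) < d \<longrightarrow>
        (\<Sum>i<n. cmod (f (v i) - f (u i))) < e)"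

definition AC_loc :: "(real \<Rightarrow> complex) \<Rightarrow> bool" where
  "AC_loc f \<longleftrightarrow> (\<forall>a b. 0 \<le> a \<longrightarrow> a \<le> b \<longrightarrow> abs_cont_on f a b)"

definition L1_loc :: "(real \<Rightarrow> complex) \<Rightarrow> bool" where
  "L1_loc q \<longleftrightarrow> (\<forall>b\<ge>0. set_integrable lborel {0..b} q)"

definition L2 :: "(real \<Rightarrow> complex) \<Rightarrow> bool" where
  "L2 y \<longleftrightarrow> y \<in> borel_measurable Mplus \<and> integrable Mplus (\<lambda>x. (cmod (y x))\<^sup>2)"

definition L2_norm :: "(real \<Rightarrow> complex) \<Rightarrow> real" where
  "L2_norm y = sqrt (\<integral>x. (cmod (y x))\<^sup>2 \<partial>Mplus)"

definition ae_eq :: "(real \<Rightarrow> complex) \<Rightarrow> (real \<Rightarrow> complex) \<Rightarrow> bool" where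
  "ae_eq y z \<longleftrightarrow> (AE x in Mplus. y x = z x)"

text \<open>A (linear) operator in L_2(R_+) is represented by its graph, a set of pairs
  (y, L y) of representatives, saturated w.r.t. a.e.-equality.\<close>
type_synonym graph = "((real \<Rightarrow> complex) \<times> (real \<Rightarrow> complex)) set"

definition is_operator :: "graph \<Rightarrow> bool" where
  "is_operator L \<longleftrightarrow>
     (\<forall>(y, f)\<in>L. L2 y \<and> L2 f) \<and>
     ((\<lambda>_. 0), (\<lambda>_. 0)) \<in> L \<and>
     (\<forall>(y1, f1)\<in>L. \<forall>(y2, f2)\<in>L. \<forall>c::complex.
        ((\<lambda>x. y1 x + c * y2 x), (\<lambda>x. f1 x + c * f2 x)) \<in> L) \<and>
     (\<forall>(y, f)\<in>L. \<forall>y' f'. L2 y' \<and> L2 f' \<and> ae_eq y y' \<and> ae_eq f f' \<longrightarrow> (y', f') \<in> L) \<and>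
     (\<forall>(y, f)\<in>L. ae_eq y (\<lambda>_. 0) \<longrightarrow> ae_eq f (\<lambda>_. 0))"

text \<open>Compact resolvent: some lambda lies in the resolvent set, i.e. L - lambda is a
  bijection of its domain onto L_2 (modulo a.e.) whose inverse is bounded, and this
  inverse is a compact operator (maps bounded sequences to sequences having an
  L_2-convergent subsequence; compactness implies boundedness).\<close>
definition has_compact_resolvent :: "graph \<Rightarrow> bool" where
  "has_compact_resolvent L \<longleftrightarrow> (\<exists>lam::complex.
     (\<forall>g. L2 g \<longrightarrow> (\<exists>(y, f)\<in>L. ae_eq (\<lambda>x. f x - lam * y x) g)) \<and>
     (\<forall>(y, f)\<in>L. ae_eq (\<lambda>x. f x - lam * y x) (\<lambda>_. 0) \<longrightarrow> ae_eq y (\<lambda>_. 0)) \<and>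
     (\<forall>(s :: nat \<Rightarrow> (real \<Rightarrow> complex) \<times> (real \<Rightarrow> complex)) C.
        (\<forall>n. s n \<in> L \<and> L2_norm (\<lambda>x. snd (s n) x - lam * fst (s n) x) \<le> C) \<longrightarrow>
        (\<exists>r h. strict_mono r \<and> L2 h \<and>
           (\<lambda>n. L2_norm (\<lambda>x. fst (s (r n)) x - h x)) \<longlonglongrightarrow> 0)))"

text \<open>The domain D_0 and the graph of the minimal operator L_0 y = -y'' + q y.
  y1 plays the role of y' and y2 of y'' (defined a.e.).\<close>
definition L0 :: "(real \<Rightarrow> complex) \<Rightarrow> graph" where
  "L0 q = {(y, f). L2 y \<and> L2 f \<and>
     (\<exists>y1 y2. AC_loc y \<and> AC_loc y1 \<and>
        (AE x in Mplus. (y has_vector_derivative y1 x) (at x)) \<and>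
        (AE x in Mplus. (y1 has_vector_derivative y2 x) (at x)) \<and>
        y 0 = 0 \<and> y1 0 = 0 \<and>
        (\<exists>x0>0. \<forall>x\<ge>x0. y x = 0) \<and>
        ae_eq f (\<lambda>x. - y2 x + q x * y x))}"

end

theory Submission
  imports Defs
begin


definition Vq :: "real \<Rightarrow> real" where
  "Vq x = of_int \<lfloor>x\<rfloor>  *  (if cos (pi  *  (of_int \<lfloor>x\<rfloor>)\<^sup>2  *  x) \<ge> 0 then 1 else -1)"

definition qq :: "real \<Rightarrow> complex" where
  "qq x = \<i>  *  complex_of_real (Vq x)"

definition Pn :: "nat \<Rightarrow> real \<Rightarrow> real" where
  "Pn n x = arcsin (sin (pi  *  (real n)\<^sup>2  *  x)) / (pi  *  real n)"

lemma Pn_cont: "continuous_on UNIV (Pn n)"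
  unfolding Pn_def divide_inverse by (intro continuous_intros) auto

lemma Pn_bound: assumes "n \<ge> 1" shows "\<bar>Pn n x\<bar> \<le> 1"
proof -
  have "\<bar>arcsin (sin (pi  *  (real n)\<^sup>2  *  x))\<bar> \<le> pi/2"
    using arcsin_bounded[of "sin (pi  *  (real n)\<^sup>2  *  x)"] by auto
  also have "\<dots> \<le> pi  *  real n" using assms pi_gt_zero by (simp add: field_simps)
  finally show ?thesis unfolding Pn_def using assms pi_gt_zero
    by (simp add: abs_divide divide_le_eq_1)
qed

lemma Pn_deriv:
  assumes "n \<ge> 1" "cos (pi  *  (real n)\<^sup>2  *  x) \<noteq> 0"
  shows "(Pn n has_real_derivative (real n  *  (if cos (pi  *  (real n)\<^sup>2  *  x) \<ge> 0 then 1 else -1))) (at x)"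
proof -
  let ?c = "cos (pi  *  (real n)\<^sup>2  *  x)" and ?s = "sin (pi  *  (real n)\<^sup>2  *  x)"
  have sc: "?s\<^sup>2 + ?c\<^sup>2 = 1" by simp
  have "?c\<^sup>2 > 0" using assms(2) by simp
  hence "?s\<^sup>2 < 1" using sc by linarith
  hence s1: "-1 < ?s" "?s < 1" using abs_square_less_1[of ?s] by (auto simp: abs_less_iff)
  have sq: "sqrt (1 - ?s\<^sup>2) = \<bar>?c\<bar>" using sc by (metis add_diff_cancel_left' real_sqrt_abs)
  have d: "((\<lambda>x. arcsin (sin (pi  *  (real n)\<^sup>2  *  x))) has_real_derivative
      (inverse (sqrt (1 - ?s\<^sup>2))  *  (?c  *  (pi  *  (real n)\<^sup>2)))) (at x)"
    by (rule DERIV_chain2[where g="\<lambda>x. sin (pi  *  (real n)\<^sup>2  *  x)", OF DERIV_arcsin[OF s1]]) (auto intro!: derivative_eq_intros)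
  have "(Pn n has_real_derivative (inverse (sqrt (1 - ?s\<^sup>2))  *  (?c  *  (pi  *  (real n)\<^sup>2))) / (pi  *  real n)) (at x)"
    unfolding Pn_def by (rule DERIV_cdivide[OF d])
  moreover have "(inverse (sqrt (1 - ?s\<^sup>2))  *  (?c  *  (pi  *  (real n)\<^sup>2))) / (pi  *  real n)
      = real n  *  (if ?c \<ge> 0 then 1 else -1)"
    using assms pi_gt_zero unfolding sq by (auto simp: field_simps power2_eq_square)
  ultimately show ?thesis by simp
qed


definition Phi :: "nat \<Rightarrow> real \<Rightarrow> real" where
  "Phi n x = integral {real n..x} (Pn n)"

lemma Phi_deriv:
  assumes "x \<in> {real n<..<real n + 1}"
  shows "(Phi n has_real_derivative Pn n x) (at x)"
proof -
  have x1: "x \<in> {real n..real n+1}" using assms by auto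
  have "((\<lambda>x. integral {real n..x} (Pn n)) has_real_derivative Pn n x) (at x within {real n..real n+1})"
    by (rule integral_has_real_derivative[OF continuous_on_subset[OF Pn_cont, of "{real n..real n+1}"] x1]) simp
  moreover have "x \<in> interior {real n..real n+1}" using assms by (simp only: interior_atLeastAtMost_real)
  ultimately have "((\<lambda>x. integral {real n..x} (Pn n)) has_real_derivative Pn n x) (at x)"
    by (simp only: at_within_interior)
  thus ?thesis unfolding Phi_def[abs_def] .
qed
lemma Phi_cont: "continuous_on {real n..real n+1} (Phi n)"
  unfolding Phi_def
  by (rule indefinite_integral_continuous_1, rule integrable_continuous_real,
      rule continuous_on_subset[OF Pn_cont]) auto

definition E :: "nat \<Rightarrow> real \<Rightarrow> complex" where
  "E n x = exp (\<i>  *  complex_of_real (Phi n x))"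

lemma E_norm[simp]: "norm (E n x) = 1"
  unfolding E_def by (simp add: norm_exp_i_times)

lemma E_cont: "continuous_on {real n..real n+1} (E n)"
  unfolding E_def by (intro continuous_on_exp continuous_on_mult continuous_on_const continuous_on_of_real Phi_cont)

lemma E_deriv:
  assumes "x \<in> {real n<..<real n + 1}"
  shows "(E n has_vector_derivative (\<i>  *  complex_of_real (Pn n x)  *  E n x)) (at x)"
proof -
  have d1: "((\<lambda>x. \<i>  *  complex_of_real (Phi n x)) has_vector_derivative (\<i>  *  complex_of_real (Pn n x))) (at x)"
    by (intro has_vector_derivative_mult_right has_vector_derivative_of_real Phi_deriv assms)
  have "((exp \<circ> (\<lambda>x. \<i>  *  complex_of_real (Phi n x))) has_vector_derivative
        (\<i>  *  complex_of_real (Pn n x)  *  exp (\<i>  *  complex_of_real (Phi n x)))) (at x)"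
    by (rule field_vector_diff_chain_at[OF d1]) (rule DERIV_exp)
  thus ?thesis unfolding E_def comp_def by simp
qed

definition G0 :: "nat \<Rightarrow> real \<Rightarrow> complex" where
  "G0 n x = complex_of_real ((sin (pi * x))\<^sup>2)  *  E n x"
definition G1 :: "nat \<Rightarrow> real \<Rightarrow> complex" where
  "G1 n x = (complex_of_real (2 * pi * sin (pi * x) * cos (pi * x)) + \<i>  *  complex_of_real ((sin (pi * x))\<^sup>2  *  Pn n x))  *  E n x"
definition G2 :: "nat \<Rightarrow> real \<Rightarrow> complex" where
  "G2 n x = (complex_of_real (2 * pi\<^sup>2 * ((cos (pi * x))\<^sup>2 - (sin (pi * x))\<^sup>2))
     + \<i>  *  complex_of_real (4 * pi * sin (pi * x) * cos (pi * x) * Pn n x)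
     + \<i>  *  complex_of_real ((sin (pi * x))\<^sup>2  *  Vq x)
     - complex_of_real ((sin (pi * x))\<^sup>2  *  (Pn n x)\<^sup>2))  *  E n x"
definition GF :: "nat \<Rightarrow> real \<Rightarrow> complex" where
  "GF n x = (- complex_of_real (2 * pi\<^sup>2 * ((cos (pi * x))\<^sup>2 - (sin (pi * x))\<^sup>2))
     - \<i>  *  complex_of_real (4 * pi * sin (pi * x) * cos (pi * x) * Pn n x)
     + complex_of_real ((sin (pi * x))\<^sup>2  *  (Pn n x)\<^sup>2))  *  E n x"

lemma GF_eq: "GF n x = - G2 n x + qq x  *  G0 n x"
  unfolding GF_def G2_def G0_def qq_def by (simp add: algebra_simps)

lemma G0_deriv:
  assumes "x \<in> {real n<..<real n + 1}"
  shows "(G0 n has_vector_derivative G1 n x) (at x)"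
proof -
  have r: "((\<lambda>x. (sin (pi * x))\<^sup>2) has_real_derivative (2 * pi * sin (pi * x) * cos (pi * x))) (at x)"
    by (auto intro!: derivative_eq_intros)
  have "(G0 n has_vector_derivative
     (complex_of_real ((sin (pi * x))\<^sup>2)  *  (\<i>  *  complex_of_real (Pn n x)  *  E n x)
      + complex_of_real (2 * pi * sin (pi * x) * cos (pi * x))  *  E n x)) (at x)"
    unfolding G0_def
    by (intro has_vector_derivative_mult has_vector_derivative_of_real r E_deriv assms)
  moreover have "complex_of_real ((sin (pi * x))\<^sup>2)  *  (\<i>  *  complex_of_real (Pn n x)  *  E n x)
      + complex_of_real (2 * pi * sin (pi * x) * cos (pi * x))  *  E n x = G1 n x"
    unfolding G1_def by (simp add: algebra_simps)
  ultimately show ?thesis by simp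
qed



lemma G1_deriv:
  assumes "n \<ge> 1" "x \<in> {real n<..<real n + 1}" "cos (pi   *   (real n)\<^sup>2   *   x) \<noteq> 0"
  shows "(G1 n has_vector_derivative G2 n x) (at x)"
proof -
  have fl: "\<lfloor>x\<rfloor> = int n" using assms(2) by (simp add: floor_eq_iff)
  have V: "Vq x = real n   *   (if cos (pi   *   (real n)\<^sup>2   *   x) \<ge> 0 then 1 else -1)"
    unfolding Vq_def fl by simp
  have P: "(Pn n has_real_derivative Vq x) (at x)" unfolding V by (rule Pn_deriv[OF assms(1,3)])
  have r1: "((\<lambda>x. 2  *  pi  *  sin (pi  *  x)  *  cos (pi  *  x)) has_real_derivative (2  *  pi\<^sup>2  *  ((cos (pi  *  x))\<^sup>2 - (sin (pi  *  x))\<^sup>2))) (at x)"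
    by (auto intro!: derivative_eq_intros simp: power2_eq_square algebra_simps)
  have r2: "((\<lambda>x. (sin (pi  *  x))\<^sup>2   *   Pn n x) has_real_derivative
       (2  *  pi  *  sin (pi  *  x)  *  cos (pi  *  x)   *   Pn n x + (sin (pi  *  x))\<^sup>2   *   Vq x)) (at x)"
    by (auto intro!: derivative_eq_intros P simp: power2_eq_square algebra_simps)
  have "(G1 n has_vector_derivative
     ((complex_of_real (2  *  pi  *  sin (pi  *  x)  *  cos (pi  *  x)) + \<i>   *   complex_of_real ((sin (pi  *  x))\<^sup>2   *   Pn n x))
          *   (\<i>   *   complex_of_real (Pn n x)   *   E n x)
      + (complex_of_real (2  *  pi\<^sup>2  *  ((cos (pi  *  x))\<^sup>2 - (sin (pi  *  x))\<^sup>2))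
          + \<i>   *   complex_of_real (2  *  pi  *  sin (pi  *  x)  *  cos (pi  *  x)   *   Pn n x + (sin (pi  *  x))\<^sup>2   *   Vq x))   *   E n x)) (at x)"
    unfolding G1_def
    by (intro has_vector_derivative_mult has_vector_derivative_add has_vector_derivative_mult_right
          has_vector_derivative_of_real r1 r2 E_deriv assms)
  moreover have "(complex_of_real (2  *  pi  *  sin (pi  *  x)  *  cos (pi  *  x)) + \<i>   *   complex_of_real ((sin (pi  *  x))\<^sup>2   *   Pn n x))
          *   (\<i>   *   complex_of_real (Pn n x)   *   E n x)
      + (complex_of_real (2  *  pi\<^sup>2  *  ((cos (pi  *  x))\<^sup>2 - (sin (pi  *  x))\<^sup>2))
          + \<i>   *   complex_of_real (2  *  pi  *  sin (pi  *  x)  *  cos (pi  *  x)   *   Pn n x + (sin (pi  *  x))\<^sup>2   *   Vq x))   *   E n x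
      = G2 n x"
    unfolding G2_def by (simp add: algebra_simps power2_eq_square)
  ultimately show ?thesis by simp
qed


definition Yf :: "nat \<Rightarrow> real \<Rightarrow> complex" where
  "Yf n x = (if x \<in> {real n..real n + 1} then G0 n x else 0)"
definition Y1f :: "nat \<Rightarrow> real \<Rightarrow> complex" where
  "Y1f n x = (if x \<in> {real n..real n + 1} then G1 n x else 0)"
definition Y2f :: "nat \<Rightarrow> real \<Rightarrow> complex" where
  "Y2f n x = (if x \<in> {real n..real n + 1} then G2 n x else 0)"
definition Ff :: "nat \<Rightarrow> real \<Rightarrow> complex" where
  "Ff n x = (if x \<in> {real n..real n + 1} then GF n x else 0)"

lemma sin_end: "sin (pi * real n) = 0" "sin (pi * (real n + 1)) = 0"
proof -
  show "sin (pi * real n) = 0" by (rule sin_npi2)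
  have "real (Suc n) = real n + 1" by simp
  thus "sin (pi * (real n + 1)) = 0" by (metis sin_npi2)
qed

lemma G0_cont: "continuous_on {real n..real n+1} (G0 n)"
  unfolding G0_def[abs_def] by (intro continuous_intros E_cont)

lemma G1_cont: "continuous_on {real n..real n+1} (G1 n)"
  unfolding G1_def[abs_def] by (intro continuous_intros E_cont continuous_on_subset[OF Pn_cont subset_UNIV])

lemma G2_cont: "continuous_on {real n..real n+1} (GF n)"
  unfolding GF_def[abs_def] by (intro continuous_intros E_cont continuous_on_subset[OF Pn_cont subset_UNIV])

lemma cont_if:
  fixes g :: "real \<Rightarrow> complex"
  assumes "continuous_on {a..b} g" "g a = 0" "g b = 0" "a \<le> b"
  shows "continuous_on UNIV (\<lambda>x. if x \<in> {a..b} then g x else 0)"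
proof -
  have "continuous_on ({a..b} \<union> ({..a} \<union> {b..})) (\<lambda>x. if x \<in> {a..b} then g x else 0)"
    by (rule continuous_on_cases) (use assms in \<open>auto intro: continuous_on_const\<close>)
  moreover have "{a..b} \<union> ({..a} \<union> {b..}) = UNIV" by auto
  ultimately show ?thesis by simp
qed

lemma Yf_cont: "continuous_on UNIV (Yf n)"
  unfolding Yf_def[abs_def]
  by (rule cont_if[OF G0_cont]) (auto simp: G0_def sin_end)

lemma Y1f_cont: "continuous_on UNIV (Y1f n)"
  unfolding Y1f_def[abs_def]
  by (rule cont_if[OF G1_cont]) (auto simp: G1_def sin_end)


lemma Yf_deriv:
  assumes "x \<noteq> real n" "x \<noteq> real n + 1"
  shows "(Yf n has_vector_derivative Y1f n x) (at x)"
proof (cases "x \<in> {real n..real n + 1}")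
  case True
  hence x: "x \<in> {real n<..<real n + 1}" using assms by auto
  show ?thesis
  proof (rule has_vector_derivative_transform_within_open[OF _ open_greaterThanLessThan x])
    show "(G0 n has_vector_derivative Y1f n x) (at x)"
      using G0_deriv[OF x] True unfolding Y1f_def by simp
    show "G0 n y = Yf n y" if "y \<in> {real n<..<real n + 1}" for y
      using that unfolding Yf_def by auto
  qed
next
  case False
  hence x: "x \<in> {..<real n} \<union> {real n + 1<..}" by auto
  show ?thesis
  proof (rule has_vector_derivative_transform_within_open[OF _ _ x])
    show "((\<lambda>_. 0) has_vector_derivative Y1f n x) (at x)"
      unfolding Y1f_def if_not_P[OF False] by simp
    show "open ({..<real n} \<union> {real n + 1<..})" by (intro open_Un open_lessThan open_greaterThan)
    show "0 = Yf n y" if "y \<in> {..<real n} \<union> {real n + 1<..}" for y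
      using that unfolding Yf_def by auto
  qed
qed

lemma Y1f_deriv:
  assumes "n \<ge> 1" "x \<noteq> real n" "x \<noteq> real n + 1" "x \<in> {real n..real n + 1} \<longrightarrow> cos (pi * (real n)\<^sup>2 * x) \<noteq> 0"
  shows "(Y1f n has_vector_derivative Y2f n x) (at x)"
proof (cases "x \<in> {real n..real n + 1}")
  case True
  hence x: "x \<in> {real n<..<real n + 1}" using assms by auto
  show ?thesis
  proof (rule has_vector_derivative_transform_within_open[OF _ open_greaterThanLessThan x])
    show "(G1 n has_vector_derivative Y2f n x) (at x)"
      using G1_deriv[OF assms(1) x] assms(4) True unfolding Y2f_def by simp
    show "G1 n y = Y1f n y" if "y \<in> {real n<..<real n + 1}" for y
      using that unfolding Y1f_def by auto
  qed
next
  case False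
  hence x: "x \<in> {..<real n} \<union> {real n + 1<..}" by auto
  show ?thesis
  proof (rule has_vector_derivative_transform_within_open[OF _ _ x])
    show "((\<lambda>_. 0) has_vector_derivative Y2f n x) (at x)"
      unfolding Y2f_def if_not_P[OF False] by simp
    show "open ({..<real n} \<union> {real n + 1<..})" by (intro open_Un open_lessThan open_greaterThan)
    show "0 = Y1f n y" if "y \<in> {..<real n} \<union> {real n + 1<..}" for y
      using that unfolding Y1f_def by auto
  qed
qed

lemma norm2: "norm (complex_of_real a + \<i> * complex_of_real b) \<le> \<bar>a\<bar> + \<bar>b\<bar>"
  by (rule order_trans[OF norm_triangle_ineq]) (simp add: norm_mult)

lemma sin_cos_le1: "\<bar>sin (t::real)\<bar> \<le> 1" "\<bar>cos t\<bar> \<le> 1" "(sin t)\<^sup>2 \<le> 1" "(cos t)\<^sup>2 \<le> 1"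
proof -
  show a: "\<bar>sin t\<bar> \<le> 1" by (rule abs_sin_le_one)
  show b: "\<bar>cos t\<bar> \<le> 1" by (rule abs_cos_le_one)
  show "(sin t)\<^sup>2 \<le> 1" using a abs_square_le_1 by blast
  show "(cos t)\<^sup>2 \<le> 1" using b abs_square_le_1 by blast
qed

lemma G0_bound: "norm (G0 n x) \<le> 1"
  unfolding G0_def norm_mult E_norm norm_of_real mult_1_right using sin_cos_le1(3)[of "pi * x"] by simp

lemma G1_bound: assumes "n \<ge> 1" shows "norm (G1 n x) \<le> 2 * pi + 1"
proof -
  have "norm (G1 n x) \<le> \<bar>2 * pi * sin (pi * x) * cos (pi * x)\<bar> + \<bar>(sin (pi * x))\<^sup>2  *  Pn n x\<bar>"
    unfolding G1_def norm_mult E_norm mult_1_right by (rule norm2)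
  also have "\<bar>2 * pi * sin (pi * x) * cos (pi * x)\<bar> \<le> 2 * pi"
    using sin_cos_le1[of "pi * x"] pi_gt_zero
    by (simp add: abs_mult mult_le_one)
  also have "\<bar>(sin (pi * x))\<^sup>2  *  Pn n x\<bar> \<le> 1"
    using sin_cos_le1[of "pi * x"] Pn_bound[OF assms, of x]
    by (simp add: abs_mult mult_le_one)
  finally show ?thesis by simp
qed


lemma norm4: "norm (x + y + z - w) \<le> norm x + norm y + norm z + norm (w::complex)"
proof -
  have "norm (x + y + z - w) \<le> norm (x + y + z) + norm w" by (rule norm_triangle_ineq4)
  also have "norm (x + y + z) \<le> norm (x + y) + norm z" by (rule norm_triangle_ineq)
  also have "norm (x + y) \<le> norm x + norm y" by (rule norm_triangle_ineq)
  finally show ?thesis by simp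
qed

lemma norm3: "norm (- x - y + z) \<le> norm x + norm y + norm (z::complex)"
proof -
  have "norm (- x - y + z) \<le> norm (- x - y) + norm z" by (rule norm_triangle_ineq)
  also have "norm (- x - y) \<le> norm (- x) + norm y" by (rule norm_triangle_ineq4)
  finally show ?thesis by simp
qed

lemma cs_diff: "\<bar>(cos (t::real))\<^sup>2 - (sin t)\<^sup>2\<bar> \<le> 1"
  using sin_cos_le1(3,4)[of t] by (simp add: abs_le_iff) (smt (verit) zero_le_power2)

lemma Vq_bound: assumes "x \<in> {real n..real n + 1}" shows "\<bar>Vq x\<bar> \<le> real n + 1"
proof -
  have "\<bar>Vq x\<bar> = \<bar>real_of_int \<lfloor>x\<rfloor>\<bar>" unfolding Vq_def by (simp add: abs_mult)
  moreover have "real_of_int \<lfloor>x\<rfloor> \<le> real n + 1"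
  proof -
    have "real_of_int \<lfloor>x\<rfloor> \<le> x" by (rule of_int_floor_le)
    moreover have "x \<le> real n + 1" using assms by simp
    ultimately show ?thesis by linarith
  qed
  moreover have "0 \<le> real_of_int \<lfloor>x\<rfloor>" using assms by auto
  ultimately show ?thesis by simp
qed

lemma G2_bound: assumes "n \<ge> 1" "x \<in> {real n..real n + 1}"
  shows "norm (G2 n x) \<le> 2 * pi\<^sup>2 + 4 * pi + real n + 2"
proof -
  let ?s = "sin (pi * x)" and ?c = "cos (pi * x)"
  have "norm (G2 n x) \<le> \<bar>2 * pi\<^sup>2 * (?c\<^sup>2 - ?s\<^sup>2)\<bar> + \<bar>4 * pi * ?s * ?c * Pn n x\<bar>
      + \<bar>?s\<^sup>2 * Vq x\<bar> + \<bar>?s\<^sup>2 * (Pn n x)\<^sup>2\<bar>"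
    unfolding G2_def norm_mult E_norm mult_1_right
    by (rule order_trans[OF norm4]) (simp only: norm_mult norm_of_real norm_ii mult_1_left order_refl)
  also have "\<bar>2 * pi\<^sup>2 * (?c\<^sup>2 - ?s\<^sup>2)\<bar> \<le> 2 * pi\<^sup>2"
    using cs_diff[of "pi * x"] by (simp add: abs_mult mult_le_one)
  also have "\<bar>4 * pi * ?s * ?c * Pn n x\<bar> \<le> 4 * pi"
    using sin_cos_le1[of "pi * x"] Pn_bound[OF assms(1), of x] pi_gt_zero
    by (simp add: abs_mult mult_le_one)
  also have "\<bar>?s\<^sup>2 * Vq x\<bar> \<le> real n + 1"
  proof -
    have "\<bar>?s\<^sup>2 * Vq x\<bar> = ?s\<^sup>2 * \<bar>Vq x\<bar>" by (simp add: abs_mult)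
    also have "\<dots> \<le> 1 * \<bar>Vq x\<bar>" by (rule mult_right_mono[OF sin_cos_le1(3)]) simp
    also have "\<dots> \<le> real n + 1" using Vq_bound[OF assms(2)] by simp
    finally show ?thesis .
  qed
  also have "\<bar>?s\<^sup>2 * (Pn n x)\<^sup>2\<bar> \<le> 1"
    using sin_cos_le1[of "pi * x"] Pn_bound[OF assms(1), of x]
    by (simp add: abs_mult mult_le_one abs_square_le_1)
  finally show ?thesis by simp
qed

lemma GF_bound: assumes "n \<ge> 1"
  shows "norm (GF n x) \<le> 2 * pi\<^sup>2 + 4 * pi + 1"
proof -
  let ?s = "sin (pi * x)" and ?c = "cos (pi * x)"
  have "norm (GF n x) \<le> \<bar>2 * pi\<^sup>2 * (?c\<^sup>2 - ?s\<^sup>2)\<bar> + \<bar>4 * pi * ?s * ?c * Pn n x\<bar>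
      + \<bar>?s\<^sup>2 * (Pn n x)\<^sup>2\<bar>"
    unfolding GF_def norm_mult E_norm mult_1_right
    by (rule order_trans[OF norm3]) (simp only: norm_mult norm_of_real norm_ii mult_1_left order_refl)
  also have "\<bar>2 * pi\<^sup>2 * (?c\<^sup>2 - ?s\<^sup>2)\<bar> \<le> 2 * pi\<^sup>2"
    using cs_diff[of "pi * x"] by (simp add: abs_mult mult_le_one)
  also have "\<bar>4 * pi * ?s * ?c * Pn n x\<bar> \<le> 4 * pi"
    using sin_cos_le1[of "pi * x"] Pn_bound[OF assms(1), of x] pi_gt_zero
    by (simp add: abs_mult mult_le_one)
  also have "\<bar>?s\<^sup>2 * (Pn n x)\<^sup>2\<bar> \<le> 1"
    using sin_cos_le1[of "pi * x"] Pn_bound[OF assms(1), of x]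
    by (simp add: abs_mult mult_le_one abs_square_le_1)
  finally show ?thesis by simp
qed


lemma lip_bound:
  fixes f f' :: "real \<Rightarrow> complex"
  assumes S: "finite S" and c: "continuous_on UNIV f"
    and d: "\<And>x. x \<notin> S \<Longrightarrow> (f has_vector_derivative f' x) (at x)"
    and b: "\<And>x. norm (f' x) \<le> B"
    and uv: "u \<le> v"
  shows "norm (f v - f u) \<le> B * (v - u)"
proof -
  have B0: "0 \<le> B" using b[of 0] norm_ge_zero order_trans by blast
  have "(f' has_integral (f v - f u)) {u..v}"
    by (rule fundamental_theorem_of_calculus_interior_strong[OF S uv])
       (auto intro: d continuous_on_subset[OF c])
  hence i: "(f' has_integral (f v - f u)) (cbox u v)" by simp
  have "norm (f v - f u) \<le> B * Henstock_Kurzweil_Integration.content (cbox u v)"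
    by (rule has_integral_bound[OF B0 i b])
  thus ?thesis using uv by simp
qed

lemma lip_AC:
  fixes f f' :: "real \<Rightarrow> complex"
  assumes S: "finite S" and c: "continuous_on UNIV f"
    and d: "\<And>x. x \<notin> S \<Longrightarrow> (f has_vector_derivative f' x) (at x)"
    and b: "\<And>x. norm (f' x) \<le> B"
  shows "AC_loc f"
proof -
  have B0: "0 \<le> B" using b[of 0] norm_ge_zero order_trans by blast
  have "abs_cont_on f a b" for a b
    unfolding abs_cont_on_def
  proof (intro allI impI)
    fix e :: real assume e: "0 < e"
    show "\<exists>d>0. \<forall>(n::nat) (u::nat \<Rightarrow> real) (v::nat \<Rightarrow> real).
        (\<forall>i<n. a \<le> u i \<and> u i \<le> v i \<and> v i \<le> b) \<longrightarrow>
        (\<forall>i<n. \<forall>j<n. i \<noteq> j \<longrightarrow> v i \<le> u j \<or> v j \<le> u i) \<longrightarrow>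
        (\<Sum>i<n. v i - u i) < d \<longrightarrow>
        (\<Sum>i<n. cmod (f (v i) - f (u i))) < e"
    proof (intro exI[of _ "e / (B + 1)"] conjI allI impI)
      show "0 < e / (B + 1)" using B0 e by simp
      fix n :: nat and u v :: "nat \<Rightarrow> real"
      assume h1: "\<forall>i<n. a \<le> u i \<and> u i \<le> v i \<and> v i \<le> b"
        and h3: "(\<Sum>i<n. v i - u i) < e / (B + 1)"
      have "(\<Sum>i<n. cmod (f (v i) - f (u i))) \<le> (\<Sum>i<n. B * (v i - u i))"
        by (intro sum_mono lip_bound[OF S c d b]) (use h1 in auto)
      also have "\<dots> = B * (\<Sum>i<n. v i - u i)" by (simp add: sum_distrib_left)
      also have "\<dots> \<le> B * (e / (B + 1))" using h3 B0 by (intro mult_left_mono) auto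
      also have "\<dots> < e" using B0 e by (simp add: field_simps)
      finally show "(\<Sum>i<n. cmod (f (v i) - f (u i))) < e" .
    qed
  qed
  thus ?thesis unfolding AC_loc_def by blast
qed

definition S1 :: "nat \<Rightarrow> real set" where
  "S1 n = {real n, real n + 1} \<union> {x \<in> {real n..real n + 1}. cos (pi * (real n)\<^sup>2 * x) = 0}"

lemma S1_finite: assumes "n \<ge> 1" shows "finite (S1 n)"
proof -
  have "{x \<in> {real n..real n + 1}. cos (pi * (real n)\<^sup>2 * x) = 0}
      \<subseteq> (\<lambda>k::int. (real_of_int k + 1/2) / (real n)\<^sup>2) ` {0..int (n^2 * (n + 1))}"
  proof
    fix x assume x: "x \<in> {x \<in> {real n..real n + 1}. cos (pi * (real n)\<^sup>2 * x) = 0}"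
    then obtain k :: int where k: "pi * (real n)\<^sup>2 * x = real_of_int k * pi + pi / 2"
      using cos_zero_iff_int2 by auto
    have n0: "(real n)\<^sup>2 \<ge> 1" using assms by simp
    have "pi * ((real n)\<^sup>2 * x) = pi * (real_of_int k + 1/2)" using k by (simp add: algebra_simps)
    hence e: "(real n)\<^sup>2 * x = real_of_int k + 1/2" using pi_gt_zero by simp
    have xn: "real n \<le> x" "x \<le> real n + 1" using x by auto
    have "(real n)\<^sup>2 * x \<ge> 1 * 1" using n0 xn assms by (intro mult_mono) auto
    hence "real_of_int k > -1" using e by linarith
    hence k0: "k \<ge> 0" by simp
    have "(real n)\<^sup>2 * x \<le> (real n)\<^sup>2 * (real n + 1)" using xn by (intro mult_left_mono) auto
    hence "real_of_int k \<le> (real n)\<^sup>2 * (real n + 1)" using e by linarith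
    also have "\<dots> = real (n^2 * (n + 1))" by (simp add: algebra_simps)
    finally have "real_of_int k \<le> real (n^2 * (n + 1))" .
    hence k1: "k \<le> int (n^2 * (n + 1))" by linarith
    have nz: "(real n)\<^sup>2 \<noteq> 0" using assms by auto
    have "x = ((real n)\<^sup>2 * x) / (real n)\<^sup>2" using nz by simp
    hence "x = (real_of_int k + 1/2) / (real n)\<^sup>2" unfolding e .
    thus "x \<in> (\<lambda>k::int. (real_of_int k + 1/2) / (real n)\<^sup>2) ` {0..int (n^2 * (n + 1))}"
      using k0 k1 by auto
  qed
  hence "finite {x \<in> {real n..real n + 1}. cos (pi * (real n)\<^sup>2 * x) = 0}"
    by (rule finite_subset) simp
  thus ?thesis unfolding S1_def by simp
qed

lemma Y1f_bound: assumes "n \<ge> 1" shows "norm (Y1f n x) \<le> 2 * pi + 1"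
  unfolding Y1f_def using G1_bound[OF assms] pi_gt_zero by auto

lemma Y2f_bound: assumes "n \<ge> 1" shows "norm (Y2f n x) \<le> 2 * pi\<^sup>2 + 4 * pi + real n + 2"
  unfolding Y2f_def using G2_bound[OF assms] pi_gt_zero by auto

lemma Yf_AC: assumes "n \<ge> 1" shows "AC_loc (Yf n)"
  by (rule lip_AC[where S="{real n, real n + 1}", OF _ Yf_cont Yf_deriv Y1f_bound[OF assms]]) auto

lemma Y1f_AC: assumes "n \<ge> 1" shows "AC_loc (Y1f n)"
  by (rule lip_AC[OF S1_finite[OF assms] Y1f_cont Y1f_deriv[OF assms] Y2f_bound[OF assms]])
     (auto simp: S1_def)



lemma meas_Mplus: "f \<in> borel_measurable borel \<Longrightarrow> f \<in> borel_measurable Mplus"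
  by (rule measurable_restrict_space1) simp

lemma sets_Mplus: "0 \<le> a \<Longrightarrow> {a..b} \<in> sets Mplus"
  by (subst sets_restrict_space_iff) auto

lemma ind_int: assumes "0 \<le> a" "a \<le> b" shows "integrable Mplus (indicator {a..b} :: real \<Rightarrow> real)"
proof -
  have "emeasure Mplus {a..b} = emeasure lborel {a..b}"
    by (rule emeasure_restrict_space) (use assms in auto)
  hence "emeasure Mplus ({a..b} \<inter> space Mplus) < \<infinity>" using assms
    by (simp add: space_restrict_space Int_absorb2)
  moreover have "{a..b} \<inter> space Mplus \<in> sets Mplus"
    using sets_Mplus[OF assms(1)] assms by (simp add: space_restrict_space Int_absorb2)
  ultimately show ?thesis by (simp add: integrable_indicator_iff)
qed

lemma ind_integral: assumes "0 \<le> a" "a \<le> b" shows "integral\<^sup>L Mplus (indicator {a..b} :: real \<Rightarrow> real) = b - a"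
proof -
  have "integral\<^sup>L Mplus (indicator {a..b} :: real \<Rightarrow> real) = measure Mplus ({a..b} \<inter> space Mplus)"
    by simp
  also have "{a..b} \<inter> space Mplus = {a..b}" using assms by (auto simp: space_restrict_space)
  also have "measure Mplus {a..b} = measure lborel {a..b}"
    by (rule measure_restrict_space) (use assms in auto)
  finally show ?thesis using assms by simp
qed

lemma AE_Mplus_fin: assumes "finite N" "\<And>x. x \<notin> N \<Longrightarrow> P x" shows "AE x in Mplus. P x"
proof -
  have "AE x in lborel. x \<notin> N" by (rule AE_not_in[OF finite_imp_null_set_lborel[OF assms(1)]])
  hence "AE x in lborel. x \<in> {0..} \<longrightarrow> P x" by (rule eventually_mono) (use assms(2) in auto)
  thus ?thesis by (subst AE_restrict_space_iff) auto
qed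

lemma L2_supp:
  fixes g :: "real \<Rightarrow> complex"
  assumes m: "g \<in> borel_measurable borel" and b: "\<And>x. norm (g x) \<le> K * indicator {a..b} x"
    and ab: "0 \<le> a" "a \<le> b"
  shows "L2 g" and "(\<integral>x. (cmod (g x))\<^sup>2 \<partial>Mplus) \<le> K\<^sup>2 * (b - a)"
proof -
  have mg: "g \<in> borel_measurable Mplus" by (rule meas_Mplus[OF m])
  have pt: "(cmod (g x))\<^sup>2 \<le> K\<^sup>2 * indicator {a..b} x" for x
  proof (cases "x \<in> {a..b}")
    case True
    thus ?thesis using b[of x] by (simp add: power_mono)
  next
    case False
    thus ?thesis using b[of x] by simp
  qed
  have i2: "integrable Mplus (\<lambda>x. K\<^sup>2 * indicator {a..b} x :: real)"
    by (intro integrable_mult_right ind_int ab)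
  have ig: "integrable Mplus (\<lambda>x. (cmod (g x))\<^sup>2)"
    by (rule Bochner_Integration.integrable_bound[OF i2]) (use mg pt in auto)
  show "L2 g" unfolding L2_def using mg ig by simp
  have "(\<integral>x. (cmod (g x))\<^sup>2 \<partial>Mplus) \<le> (\<integral>x. K\<^sup>2 * indicator {a..b} x \<partial>Mplus)"
    by (rule integral_mono[OF ig i2 pt])
  also have "\<dots> = K\<^sup>2 * (b - a)" using ind_integral[OF ab] by simp
  finally show "(\<integral>x. (cmod (g x))\<^sup>2 \<partial>Mplus) \<le> K\<^sup>2 * (b - a)" .
qed


lemma Yf_meas: "Yf n \<in> borel_measurable borel"
  by (rule borel_measurable_continuous_onI[OF Yf_cont])

lemma Ff_meas: "Ff n \<in> borel_measurable borel"
  unfolding Ff_def[abs_def]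
  by (rule borel_measurable_continuous_on_if) (auto intro: G2_cont continuous_on_const)

lemma Yf_le: "norm (Yf n x) \<le> 1 * indicator {real n..real n + 1} x"
  unfolding Yf_def using G0_bound by (auto simp: indicator_def)

lemma Ff_lam_le: assumes "n \<ge> 1"
  shows "norm (Ff n x - lam * Yf n x) \<le> (2 * pi\<^sup>2 + 4 * pi + 1 + cmod lam) * indicator {real n..real n + 1} x"
proof (cases "x \<in> {real n..real n + 1}")
  case True
  have "norm (Ff n x - lam * Yf n x) \<le> norm (GF n x) + cmod lam * norm (G0 n x)"
    using True unfolding Ff_def Yf_def by (simp add: norm_triangle_ineq4 norm_mult order_trans[OF norm_triangle_ineq4])
  also have "\<dots> \<le> (2 * pi\<^sup>2 + 4 * pi + 1) + cmod lam * 1"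
    by (intro add_mono mult_left_mono GF_bound[OF assms] G0_bound) auto
  finally show ?thesis using True by simp
next
  case False
  thus ?thesis unfolding Ff_def Yf_def if_not_P[OF False] by simp
qed

lemma in_L0: assumes "n \<ge> 1" shows "(Yf n, Ff n) \<in> L0 qq"
proof -
  have "L2 (Yf n)" by (rule L2_supp(1)[OF Yf_meas Yf_le]) auto
  moreover have "L2 (Ff n)"
  proof -
    have "norm (Ff n x) \<le> (2 * pi\<^sup>2 + 4 * pi + 1 + cmod 0) * indicator {real n..real n + 1} x" for x
      using Ff_lam_le[OF assms, of x 0] by simp
    thus ?thesis by (rule L2_supp(1)[OF Ff_meas]) auto
  qed
  moreover have "AE x in Mplus. (Yf n has_vector_derivative Y1f n x) (at x)"
    by (rule AE_Mplus_fin[where N="{real n, real n + 1}"]) (auto intro: Yf_deriv)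
  moreover have "AE x in Mplus. (Y1f n has_vector_derivative Y2f n x) (at x)"
    by (rule AE_Mplus_fin[OF S1_finite[OF assms]]) (auto intro!: Y1f_deriv[OF assms] simp: S1_def)
  moreover have "Yf n 0 = 0" "Y1f n 0 = 0" using assms by (auto simp: Yf_def Y1f_def)
  moreover have "\<exists>x0>0. \<forall>x\<ge>x0. Yf n x = 0"
    by (rule exI[of _ "real n + 2"]) (auto simp: Yf_def)
  moreover have "ae_eq (Ff n) (\<lambda>x. - Y2f n x + qq x * Yf n x)"
    unfolding ae_eq_def by (rule AE_I2) (auto simp: Ff_def Y2f_def Yf_def GF_eq)
  ultimately show ?thesis unfolding L0_def using Yf_AC[OF assms] Y1f_AC[OF assms] by blast
qed


lemma sin_sq_big:
  assumes "x \<in> {real a + 1/4..real a + 3/4}"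
  shows "(sin (pi * x))\<^sup>2 \<ge> 1/2"
proof -
  define t where "t = x - real a"
  have t: "1/4 \<le> t" "t \<le> 3/4" using assms unfolding t_def by auto
  have "sin (pi * x) = sin (pi * t + pi * real a)" unfolding t_def by (simp add: algebra_simps)
  also have "\<dots> = sin (pi * t) * cos (pi * real a)" by (simp add: sin_add)
  finally have e1: "(sin (pi * x))\<^sup>2 = (sin (pi * t))\<^sup>2 * (cos (pi * real a))\<^sup>2"
    by (simp add: power_mult_distrib)
  have "(cos (pi * real a))\<^sup>2 = 1" using sin_cos_squared_add[of "pi * real a"] by simp
  hence e2: "(sin (pi * x))\<^sup>2 = (sin (pi * t))\<^sup>2" using e1 by simp
  have "sin (pi * t) = cos (pi/2 - pi * t)" by (simp add: sin_cos_eq)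
  also have "\<dots> = cos \<bar>pi/2 - pi * t\<bar>" by simp
  finally have e3: "sin (pi * t) = cos \<bar>pi/2 - pi * t\<bar>" .
  have "\<bar>pi/2 - pi * t\<bar> \<le> pi/4"
  proof -
    have "pi * (1/4) \<le> pi * t" "pi * t \<le> pi * (3/4)" using t pi_gt_zero by (intro mult_left_mono; simp)+
    thus ?thesis unfolding abs_le_iff by linarith
  qed
  hence "cos (pi/4) \<le> cos \<bar>pi/2 - pi * t\<bar>"
    by (intro cos_monotone_0_pi_le) (use pi_gt_zero in auto)
  hence s: "sqrt 2 / 2 \<le> sin (pi * t)" using e3 cos_45 by simp
  have "(sqrt 2 / 2)\<^sup>2 \<le> (sin (pi * t))\<^sup>2" by (rule power_mono[OF s]) simp
  moreover have "(sqrt 2 / 2)\<^sup>2 = (1/2::real)" by (simp add: power_divide)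
  ultimately show ?thesis using e2 by simp
qed

lemma L2_diff_int:
  assumes f: "L2 f" and g: "L2 g"
  shows "integrable Mplus (\<lambda>x. (cmod (f x - g x))\<^sup>2)"
proof -
  have [measurable]: "f \<in> borel_measurable Mplus" "g \<in> borel_measurable Mplus"
    using f g unfolding L2_def by auto
  have i: "integrable Mplus (\<lambda>x. 2 * (cmod (f x))\<^sup>2 + 2 * (cmod (g x))\<^sup>2)"
    using f g unfolding L2_def by auto
  have pt: "(cmod (f x - g x))\<^sup>2 \<le> 2 * (cmod (f x))\<^sup>2 + 2 * (cmod (g x))\<^sup>2" for x
  proof -
    have "cmod (f x - g x) \<le> cmod (f x) + cmod (g x)" by (rule norm_triangle_ineq4)
    hence "(cmod (f x - g x))\<^sup>2 \<le> (cmod (f x) + cmod (g x))\<^sup>2" by (rule power_mono) simp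
    also have "\<dots> \<le> 2 * (cmod (f x))\<^sup>2 + 2 * (cmod (g x))\<^sup>2"
      by (smt (verit) power2_sum sum_squares_bound zero_le_power2 power2_diff)
    finally show ?thesis .
  qed
  show ?thesis
    by (rule Bochner_Integration.integrable_bound[OF i]) (auto intro!: order_trans[OF pt])
qed

lemma L2_tri:
  assumes f: "L2 f" and g: "L2 g" and h: "L2 h"
  shows "(\<integral>x. (cmod (f x - g x))\<^sup>2 \<partial>Mplus)
     \<le> 2 * (\<integral>x. (cmod (f x - h x))\<^sup>2 \<partial>Mplus) + 2 * (\<integral>x. (cmod (g x - h x))\<^sup>2 \<partial>Mplus)"
proof -
  have pt: "(cmod (f x - g x))\<^sup>2 \<le> 2 * (cmod (f x - h x))\<^sup>2 + 2 * (cmod (g x - h x))\<^sup>2" for x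
  proof -
    have "cmod (f x - g x) \<le> cmod (f x - h x) + cmod (g x - h x)"
      using norm_triangle_ineq4[of "f x - h x" "g x - h x"] by simp
    hence "(cmod (f x - g x))\<^sup>2 \<le> (cmod (f x - h x) + cmod (g x - h x))\<^sup>2" by (rule power_mono) simp
    also have "\<dots> \<le> 2 * (cmod (f x - h x))\<^sup>2 + 2 * (cmod (g x - h x))\<^sup>2"
      by (smt (verit) power2_sum sum_squares_bound zero_le_power2 power2_diff)
    finally show ?thesis .
  qed
  have "(\<integral>x. (cmod (f x - g x))\<^sup>2 \<partial>Mplus)
     \<le> (\<integral>x. 2 * (cmod (f x - h x))\<^sup>2 + 2 * (cmod (g x - h x))\<^sup>2 \<partial>Mplus)"
    by (rule integral_mono[OF L2_diff_int[OF f g] _ pt])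
       (intro Bochner_Integration.integrable_add integrable_mult_right L2_diff_int f g h)
  also have "\<dots> = 2 * (\<integral>x. (cmod (f x - h x))\<^sup>2 \<partial>Mplus) + 2 * (\<integral>x. (cmod (g x - h x))\<^sup>2 \<partial>Mplus)"
    by (simp add: L2_diff_int[OF f h] L2_diff_int[OF g h])
  finally show ?thesis .
qed

lemma sep:
  assumes "a \<ge> 1" "b \<ge> 1" "a \<noteq> b"
  shows "1/8 \<le> (\<integral>x. (cmod (Yf a x - Yf b x))\<^sup>2 \<partial>Mplus)"
proof -
  have La: "L2 (Yf a)" by (rule L2_supp(1)[OF Yf_meas Yf_le]) auto
  have Lb: "L2 (Yf b)" by (rule L2_supp(1)[OF Yf_meas Yf_le]) auto
  have pt: "(1/4) * indicator {real a + 1/4..real a + 3/4} x \<le> (cmod (Yf a x - Yf b x))\<^sup>2" for x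
  proof (cases "x \<in> {real a + 1/4..real a + 3/4}")
    case True
    have xa: "x \<in> {real a..real a + 1}" using True by auto
    have xb: "x \<notin> {real b..real b + 1}"
    proof
      assume "x \<in> {real b..real b + 1}"
      hence "real b < real a + 1" "real a < real b + 1" using True by auto
      hence "b < a + 1" "a < b + 1" by linarith+
      thus False using assms(3) by linarith
    qed
    have "Yf a x - Yf b x = G0 a x" unfolding Yf_def if_P[OF xa] if_not_P[OF xb] by simp
    moreover have "cmod (G0 a x) = (sin (pi * x))\<^sup>2" unfolding G0_def norm_mult E_norm norm_of_real by simp
    ultimately have "cmod (Yf a x - Yf b x) = (sin (pi * x))\<^sup>2" by simp
    moreover have "(1/2::real) \<le> (sin (pi * x))\<^sup>2" by (rule sin_sq_big[OF True])
    ultimately have "(1/2::real)\<^sup>2 \<le> (cmod (Yf a x - Yf b x))\<^sup>2" by (metis power_mono zero_le_divide_1_iff zero_le_numeral)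
    thus ?thesis using True by (simp add: power2_eq_square)
  next
    case False
    thus ?thesis by simp
  qed
  have "(\<integral>x. (1/4) * indicator {real a + 1/4..real a + 3/4} x \<partial>Mplus) \<le> (\<integral>x. (cmod (Yf a x - Yf b x))\<^sup>2 \<partial>Mplus)"
    by (rule integral_mono[OF _ L2_diff_int[OF La Lb] pt]) (intro integrable_mult_right ind_int; simp)
  moreover have "(\<integral>x. (1/4) * indicator {real a + 1/4..real a + 3/4} x \<partial>Mplus) = (1/4::real) * (1/2)"
    using ind_integral[of "real a + 1/4" "real a + 3/4"] by simp
  ultimately show ?thesis by simp
qed


lemma Vq_meas: "Vq \<in> borel_measurable borel"
  unfolding Vq_def[abs_def] by measurable

lemma Vq_abs: "\<bar>Vq x\<bar> = \<bar>real_of_int \<lfloor>x\<rfloor>\<bar>"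
  unfolding Vq_def by (simp add: abs_mult)

lemma qq_norm: "cmod (qq x) = \<bar>Vq x\<bar>"
  unfolding qq_def by (simp add: norm_mult)

lemma qq_L1: "L1_loc qq"
  unfolding L1_loc_def set_integrable_def
proof (intro allI impI)
  fix b :: real assume b: "0 \<le> b"
  have i: "integrable lborel (\<lambda>x. (b + 1) * indicator {0..b} x :: real)"
    using b by (intro integrable_mult_right) (simp add: integrable_indicator_iff)
  have m: "(\<lambda>x. indicator {0..b} x *\<^sub>R qq x) \<in> borel_measurable lborel"
    unfolding qq_def using Vq_meas by measurable
  show "integrable lborel (\<lambda>x. indicator {0..b} x *\<^sub>R qq x)"
  proof (rule Bochner_Integration.integrable_bound[OF i m], rule AE_I2)
    fix x
    show "norm (indicator {0..b} x *\<^sub>R qq x) \<le> norm ((b + 1) * indicator {0..b} x)"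
    proof (cases "x \<in> {0..b}")
      case True
      hence x: "0 \<le> x" "x \<le> b" by auto
      have "real_of_int \<lfloor>x\<rfloor> \<le> x" by (rule of_int_floor_le)
      moreover have "0 \<le> real_of_int \<lfloor>x\<rfloor>" using x by simp
      ultimately have "\<bar>Vq x\<bar> \<le> b + 1" unfolding Vq_abs using x by linarith
      thus ?thesis using True b by (simp add: qq_norm)
    next
      case False
      thus ?thesis by simp
    qed
  qed
qed

lemma qq_lim: "filterlim (\<lambda>x. cmod (qq x)) at_top at_top"
proof (rule filterlim_at_top_mono[OF filterlim_tendsto_add_at_top[OF tendsto_const filterlim_ident]])
  show "\<forall>\<^sub>F x in at_top. -1 + x \<le> cmod (qq x)"
    using eventually_ge_at_top[of "0::real"]
  proof (rule eventually_mono)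
    fix x :: real assume x: "0 \<le> x"
    have "x < real_of_int \<lfloor>x\<rfloor> + 1" by linarith
    moreover have "0 \<le> real_of_int \<lfloor>x\<rfloor>" using x by simp
    ultimately show "-1 + x \<le> cmod (qq x)" unfolding qq_norm Vq_abs by linarith
  qed
qed

theorem theorem3:
  shows "\<exists>q :: real \<Rightarrow> complex.
     L1_loc q \<and> (\<forall>x\<ge>0. Re (q x) = 0) \<and>
     filterlim (\<lambda>x. cmod (q x)) at_top at_top \<and>
     \<not> (\<exists>L. is_operator L \<and> L0 q \<subseteq> L \<and> has_compact_resolvent L)"
proof (intro exI[of _ qq] conjI)
  show "L1_loc qq" by (rule qq_L1)
  show "\<forall>x\<ge>0. Re (qq x) = 0" by (simp add: qq_def)
  show "filterlim (\<lambda>x. cmod (qq x)) at_top at_top" by (rule qq_lim)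
  show "\<not> (\<exists>L. is_operator L \<and> L0 qq \<subseteq> L \<and> has_compact_resolvent L)"
  proof
    assume "\<exists>L. is_operator L \<and> L0 qq \<subseteq> L \<and> has_compact_resolvent L"
    then obtain L where sub: "L0 qq \<subseteq> L" and cr: "has_compact_resolvent L" by blast
    then obtain lam where comp: "\<forall>(s :: nat \<Rightarrow> (real \<Rightarrow> complex) \<times> (real \<Rightarrow> complex)) C.
        (\<forall>n. s n \<in> L \<and> L2_norm (\<lambda>x. snd (s n) x - lam * fst (s n) x) \<le> C) \<longrightarrow>
        (\<exists>r h. strict_mono r \<and> L2 h \<and>
           (\<lambda>n. L2_norm (\<lambda>x. fst (s (r n)) x - h x)) \<longlonglongrightarrow> 0)"
      unfolding has_compact_resolvent_def by blast
    define s :: "nat \<Rightarrow> (real \<Rightarrow> complex) \<times> (real \<Rightarrow> complex)"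
      where "s n = (Yf (n + 1), Ff (n + 1))" for n
    define C where "C = 2 * pi\<^sup>2 + 4 * pi + 1 + cmod lam"
    have C0: "0 \<le> C" unfolding C_def using pi_gt_zero by (simp add: add_nonneg_nonneg)
    have "\<forall>n. s n \<in> L \<and> L2_norm (\<lambda>x. snd (s n) x - lam * fst (s n) x) \<le> C"
    proof
      fix n
      have "s n \<in> L0 qq" unfolding s_def by (rule in_L0) simp
      moreover have "L2_norm (\<lambda>x. snd (s n) x - lam * fst (s n) x) \<le> C"
      proof -
        have [measurable]: "Ff (n + 1) \<in> borel_measurable borel" "Yf (n + 1) \<in> borel_measurable borel"
          by (rule Ff_meas, rule Yf_meas)
        have m: "(\<lambda>x. Ff (n + 1) x - lam * Yf (n + 1) x) \<in> borel_measurable borel" by measurable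
        have bnd: "norm (Ff (n + 1) x - lam * Yf (n + 1) x) \<le> C * indicator {real (n + 1)..real (n + 1) + 1} x" for x
          unfolding C_def by (rule Ff_lam_le) simp
        have "(\<integral>x. (cmod (Ff (n + 1) x - lam * Yf (n + 1) x))\<^sup>2 \<partial>Mplus) \<le> C\<^sup>2 * (real (n + 1) + 1 - real (n + 1))"
          by (rule L2_supp(2)[OF m bnd]) auto
        hence "(\<integral>x. (cmod (Ff (n + 1) x - lam * Yf (n + 1) x))\<^sup>2 \<partial>Mplus) \<le> C\<^sup>2" by simp
        hence "sqrt (\<integral>x. (cmod (Ff (n + 1) x - lam * Yf (n + 1) x))\<^sup>2 \<partial>Mplus) \<le> sqrt (C\<^sup>2)"
          by (rule real_sqrt_le_mono)
        thus ?thesis using C0 unfolding L2_norm_def s_def by simp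
      qed
      ultimately show "s n \<in> L \<and> L2_norm (\<lambda>x. snd (s n) x - lam * fst (s n) x) \<le> C" using sub by blast
    qed
    then obtain r h where r: "strict_mono r" and h: "L2 h"
      and lim: "(\<lambda>n. L2_norm (\<lambda>x. fst (s (r n)) x - h x)) \<longlonglongrightarrow> 0"
      using comp by blast
    define Dd where "Dd n = (\<integral>x. (cmod (Yf (r n + 1) x - h x))\<^sup>2 \<partial>Mplus)" for n
    have "\<forall>\<^sub>F n in sequentially. L2_norm (\<lambda>x. fst (s (r n)) x - h x) < 1/8"
      by (rule order_tendstoD(2)[OF lim]) simp
    then obtain N where N: "\<And>n. n \<ge> N \<Longrightarrow> L2_norm (\<lambda>x. fst (s (r n)) x - h x) < 1/8"
      unfolding eventually_sequentially by blast
    have Dsmall: "Dd n < 1/64" if "n \<ge> N" for n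
    proof -
      have D0: "0 \<le> Dd n" unfolding Dd_def by (rule Bochner_Integration.integral_nonneg) simp
      have "sqrt (Dd n) < 1/8" using N[OF that] unfolding L2_norm_def s_def Dd_def by simp
      hence "(sqrt (Dd n))\<^sup>2 < (1/8)\<^sup>2" by (rule power_strict_mono) (use D0 in auto)
      thus ?thesis using D0 by (simp add: power2_eq_square)
    qed
    have ne: "r N + 1 \<noteq> r (Suc N) + 1" using r by (simp add: strict_mono_eq)
    have LY: "L2 (Yf m)" for m by (rule L2_supp(1)[OF Yf_meas Yf_le]) auto
    have "1/8 \<le> (\<integral>x. (cmod (Yf (r N + 1) x - Yf (r (Suc N) + 1) x))\<^sup>2 \<partial>Mplus)"
      by (rule sep[OF _ _ ne]) auto
    also have "\<dots> \<le> 2 * Dd N + 2 * Dd (Suc N)"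
      unfolding Dd_def by (rule L2_tri[OF LY LY h])
    also have "\<dots> < 2 * (1/64) + 2 * (1/64)"
      using Dsmall[of N] Dsmall[of "Suc N"] by simp
    finally show False by simp
  qed
qed


end
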